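(* Let $(Y_i,u_i)$, $i\in I$, be ultrametric spaces whose value sets $u_iY_i$ are all contained in a common totally ordered set, and assume that $I$ is finite or that $\bigcup_{i\in I}u_iY_i$ is well ordered. Equip $\prod_{i\in I}Y_i$ with $u((y_i)_{i\in I},(z_i)_{i\in I}):=\min_{i\in I}u_i(y_i,z_i)$. If every $(Y_i,u_i)$ is spherically complete, then so is the direct product $(\prod_{i\in I}Y_i,u)$.
   Context: An ultrametric space $(Y,u)$ is a set with a map $u$ from $Y\times Y$ onto a totally ordered set $\Gamma$ with last element $\infty$ such that $u(y,z)=\infty$ iff $y=z$, $u(y,z)\ge\min\{u(y,x),u(x,z)\}$ and $u(y,z)=u(z,y)$; its value set is $uY=\Gamma\setminus\{\infty\}$. Closed balls are $B_\alpha(y)=\{z:u(y,z)\ge\alpha\}$; a ball is a union of a non-empty collection of closed balls with a common element; a nest of balls is a set of balls totally ordered by inclusion; the space is spherically complete if every nest of balls has non-empty intersection. The map $u$ on the product is an ultrametric with values in $\bigcup_i u_iY_i\cup\{\infty\}$. *)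

theory Defs
  imports "HOL-Library.FuncSet"
begin

text \<open>Ultrametric spaces with values in a totally ordered type with last element
  \<open>top\<close> (playing the role of \<infinity>). The space is the carrier set \<open>Y\<close>.\<close>

definition ultrametric :: "'a set \<Rightarrow> ('a \<Rightarrow> 'a \<Rightarrow> 'g::{linorder,order_top}) \<Rightarrow> bool" where
  "ultrametric Y u \<longleftrightarrow>
     (\<forall>y\<in>Y. \<forall>z\<in>Y. (u y z = top \<longleftrightarrow> y = z) \<and> u y z = u z y \<and>
        (\<forall>x\<in>Y. min (u y x) (u x z) \<le> u y z))"

definition value_set :: "'a set \<Rightarrow> ('a \<Rightarrow> 'a \<Rightarrow> 'g::{linorder,order_top}) \<Rightarrow> 'g set" where
  "value_set Y u = {u y z | y z. y \<in> Y \<and> z \<in> Y \<and> y \<noteq> z}"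

definition value_range :: "'a set \<Rightarrow> ('a \<Rightarrow> 'a \<Rightarrow> 'g::{linorder,order_top}) \<Rightarrow> 'g set" where
  "value_range Y u = {u y z | y z. y \<in> Y \<and> z \<in> Y}"

definition closed_ball :: "'a set \<Rightarrow> ('a \<Rightarrow> 'a \<Rightarrow> 'g::{linorder,order_top}) \<Rightarrow> 'g \<Rightarrow> 'a \<Rightarrow> 'a set" where
  "closed_ball Y u \<alpha> y = {z \<in> Y. \<alpha> \<le> u y z}"

definition closed_balls :: "'a set \<Rightarrow> ('a \<Rightarrow> 'a \<Rightarrow> 'g::{linorder,order_top}) \<Rightarrow> 'a set set" where
  "closed_balls Y u = {closed_ball Y u \<alpha> y | \<alpha> y. \<alpha> \<in> value_range Y u \<and> y \<in> Y}"

definition is_ball :: "'a set \<Rightarrow> ('a \<Rightarrow> 'a \<Rightarrow> 'g::{linorder,order_top}) \<Rightarrow> 'a set \<Rightarrow> bool" where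
  "is_ball Y u B \<longleftrightarrow>
     (\<exists>C. C \<noteq> {} \<and> C \<subseteq> closed_balls Y u \<and> (\<exists>x. \<forall>D\<in>C. x \<in> D) \<and> B = \<Union>C)"

definition nest_of_balls :: "'a set \<Rightarrow> ('a \<Rightarrow> 'a \<Rightarrow> 'g::{linorder,order_top}) \<Rightarrow> 'a set set \<Rightarrow> bool" where
  "nest_of_balls Y u N \<longleftrightarrow>
     N \<noteq> {} \<and> (\<forall>B\<in>N. is_ball Y u B) \<and> (\<forall>B\<in>N. \<forall>B'\<in>N. B \<subseteq> B' \<or> B' \<subseteq> B)"

definition spherically_complete :: "'a set \<Rightarrow> ('a \<Rightarrow> 'a \<Rightarrow> 'g::{linorder,order_top}) \<Rightarrow> bool" where
  "spherically_complete Y u \<longleftrightarrow> (\<forall>N. nest_of_balls Y u N \<longrightarrow> \<Inter>N \<noteq> {})"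

definition well_ordered_set :: "'g::linorder set \<Rightarrow> bool" where
  "well_ordered_set S \<longleftrightarrow> (\<forall>T. T \<subseteq> S \<and> T \<noteq> {} \<longrightarrow> (\<exists>m\<in>T. \<forall>t\<in>T. m \<le> t))"

definition prod_u :: "'i set \<Rightarrow> ('i \<Rightarrow> 'a \<Rightarrow> 'a \<Rightarrow> 'g::{linorder,order_top})
                      \<Rightarrow> ('i \<Rightarrow> 'a) \<Rightarrow> ('i \<Rightarrow> 'a) \<Rightarrow> 'g" where
  "prod_u I u y z = (if I = {} then top else (LEAST v. \<exists>i\<in>I. v = u i (y i) (z i)))"

end

theory Submission
  imports Defs
begin

lemma um_top: "ultrametric Y u \<Longrightarrow> x\<in>Y \<Longrightarrow> u x x = top"
  unfolding ultrametric_def by blast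

lemma recenter:
  assumes "ultrametric Y u" "x\<in>Y" "y\<in>Y" "\<alpha> \<le> u y x" "v\<in>Y"
  shows "(\<alpha> \<le> u y v) \<longleftrightarrow> (\<alpha> \<le> u x v)"
proof
  have s: "u x y = u y x" using assms unfolding ultrametric_def by blast
  assume "\<alpha> \<le> u y v"
  moreover have "min (u x y) (u y v) \<le> u x v" using assms unfolding ultrametric_def by blast
  ultimately show "\<alpha> \<le> u x v" using s assms(4) by (metis min.bounded_iff order_trans)
next
  assume "\<alpha> \<le> u x v"
  moreover have "min (u y x) (u x v) \<le> u y v" using assms unfolding ultrametric_def by blast
  ultimately show "\<alpha> \<le> u y v" using assms(4) by (metis min.bounded_iff order_trans)
qed

lemma ball_of:
  assumes "ultrametric Y u" "x\<in>Y" "A \<noteq> {}"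
  shows "is_ball Y u {v\<in>Y. \<exists>\<alpha>\<in>A. \<alpha> \<le> u x v}"
proof -
  let ?C = "{closed_ball Y u (u x v) x | v. v\<in>Y \<and> (\<exists>\<alpha>\<in>A. \<alpha> \<le> u x v)}"
  have t: "u x x = top" using um_top assms by metis
  obtain a where a: "a \<in> A" using assms by blast
  have "closed_ball Y u (u x x) x \<in> ?C" using a t assms(2) by force
  hence ne: "?C \<noteq> {}" by blast
  have sub: "?C \<subseteq> closed_balls Y u"
    unfolding closed_balls_def value_range_def using assms(2) by blast
  have com: "\<forall>D\<in>?C. x \<in> D" unfolding closed_ball_def using t assms(2) by auto
  have eq: "{v\<in>Y. \<exists>\<alpha>\<in>A. \<alpha> \<le> u x v} = \<Union>?C"
  proof
    show "{v\<in>Y. \<exists>\<alpha>\<in>A. \<alpha> \<le> u x v} \<subseteq> \<Union>?C"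
    proof
      fix w assume w: "w \<in> {v\<in>Y. \<exists>\<alpha>\<in>A. \<alpha> \<le> u x v}"
      hence "w \<in> closed_ball Y u (u x w) x" unfolding closed_ball_def by auto
      thus "w \<in> \<Union>?C" using w by blast
    qed
    show "\<Union>?C \<subseteq> {v\<in>Y. \<exists>\<alpha>\<in>A. \<alpha> \<le> u x v}"
    proof
      fix w assume "w \<in> \<Union>?C"
      then obtain v \<alpha> where v: "v\<in>Y" "\<alpha>\<in>A" "\<alpha> \<le> u x v" "w \<in> closed_ball Y u (u x v) x"
        by blast
      hence "w \<in> Y" "u x v \<le> u x w" unfolding closed_ball_def by auto
      thus "w \<in> {v\<in>Y. \<exists>\<alpha>\<in>A. \<alpha> \<le> u x v}" using v(2,3) order_trans by blast
    qed
  qed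
  show ?thesis unfolding is_ball_def
    by (rule exI[of _ ?C], intro conjI ne sub eq exI[of _ x] com)
qed

lemma least_attained:
  assumes ultra: "\<forall>i\<in>I. ultrametric (Y i) (u i)"
    and fin_or_wo: "finite I \<or> well_ordered_set (\<Union>i\<in>I. value_set (Y i) (u i))"
    and ne: "I \<noteq> {}" and x: "x \<in> Pi\<^sub>E I Y" and z: "z \<in> Pi\<^sub>E I Y"
  shows "\<exists>k\<in>I. \<forall>i\<in>I. u k (x k) (z k) \<le> u i (x i) (z i)"
  using fin_or_wo
proof
  assume f: "finite I"
  let ?f = "\<lambda>i. u i (x i) (z i)"
  have "finite (?f ` I)" using f by simp
  moreover have "?f ` I \<noteq> {}" using ne by simp
  ultimately have "Min (?f ` I) \<in> ?f ` I" by (rule Min_in)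
  then obtain k where k: "k\<in>I" "?f k = Min (?f ` I)" by auto
  have "\<forall>i\<in>I. ?f k \<le> ?f i" using k f by simp
  thus ?thesis using k by blast
next
  assume wo: "well_ordered_set (\<Union>i\<in>I. value_set (Y i) (u i))"
  let ?T = "{u i (x i) (z i) | i. i\<in>I \<and> x i \<noteq> z i}"
  show ?thesis
  proof (cases "?T = {}")
    case True
    then have "\<forall>i\<in>I. x i = z i" by blast
    hence "\<forall>i\<in>I. u i (x i) (z i) = top" using ultra x um_top by (metis PiE_mem)
    thus ?thesis using ne by fastforce
  next
    case False
    have "?T \<subseteq> (\<Union>i\<in>I. value_set (Y i) (u i))"
      unfolding value_set_def using x z by (fastforce dest: PiE_mem)
    then obtain m where m: "m \<in> ?T" "\<forall>t\<in>?T. m \<le> t" using wo False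
      unfolding well_ordered_set_def by blast
    then obtain k where k: "k\<in>I" "m = u k (x k) (z k)" by blast
    have "\<forall>i\<in>I. m \<le> u i (x i) (z i)"
    proof
      fix i assume i: "i\<in>I"
      show "m \<le> u i (x i) (z i)"
      proof (cases "x i = z i")
        case True
        then have "u i (x i) (z i) = top" using ultra x um_top i by (metis PiE_mem)
        thus ?thesis by simp
      next
        case False thus ?thesis using m i by blast
      qed
    qed
    thus ?thesis using k by blast
  qed
qed

lemma prod_ge:
  assumes ultra: "\<forall>i\<in>I. ultrametric (Y i) (u i)"
    and fin_or_wo: "finite I \<or> well_ordered_set (\<Union>i\<in>I. value_set (Y i) (u i))"
    and x: "x \<in> Pi\<^sub>E I Y" and z: "z \<in> Pi\<^sub>E I Y"
  shows "(\<alpha> \<le> prod_u I u x z) \<longleftrightarrow> (\<forall>i\<in>I. \<alpha> \<le> u i (x i) (z i))"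
proof (cases "I = {}")
  case True thus ?thesis unfolding prod_u_def by simp
next
  case False
  obtain k where k: "k\<in>I" "\<forall>i\<in>I. u k (x k) (z k) \<le> u i (x i) (z i)"
    using least_attained[OF ultra fin_or_wo False x z] by blast
  have "prod_u I u x z = u k (x k) (z k)"
    unfolding prod_u_def using False
    by (simp only: if_False, intro Least_equality) (use k in auto)
  thus ?thesis using k by (metis order_trans)
qed

lemma prod_ball_form:
  assumes ultra: "\<forall>i\<in>I. ultrametric (Y i) (u i)"
    and fin_or_wo: "finite I \<or> well_ordered_set (\<Union>i\<in>I. value_set (Y i) (u i))"
    and B: "is_ball (Pi\<^sub>E I Y) (prod_u I u) B"
  shows "\<exists>x\<in>Pi\<^sub>E I Y. \<exists>A. A \<noteq> {} \<and>
           B = {w\<in>Pi\<^sub>E I Y. \<exists>\<alpha>\<in>A. \<forall>i\<in>I. \<alpha> \<le> u i (x i) (w i)}"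
proof -
  obtain C x where C: "C \<noteq> {}" "C \<subseteq> closed_balls (Pi\<^sub>E I Y) (prod_u I u)"
    "\<forall>D\<in>C. x \<in> D" "B = \<Union>C"
    using B unfolding is_ball_def by blast
  define S where "S = (\<lambda>\<alpha>. {w\<in>Pi\<^sub>E I Y. \<forall>i\<in>I. \<alpha> \<le> u i (x i) (w i)})"
  define A where "A = {\<alpha>. S \<alpha> \<in> C}"
  have xm: "x \<in> Pi\<^sub>E I Y"
  proof -
    obtain D where D: "D \<in> C" using C(1) by blast
    hence "D \<in> closed_balls (Pi\<^sub>E I Y) (prod_u I u)" using C(2) by blast
    hence "D \<subseteq> Pi\<^sub>E I Y" unfolding closed_balls_def closed_ball_def by blast
    thus ?thesis using D C(3) by blast
  qed
  have key: "\<exists>\<alpha>. D = S \<alpha>" if D: "D \<in> C" for D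
  proof -
    have "D \<in> closed_balls (Pi\<^sub>E I Y) (prod_u I u)" using D C(2) by (rule subsetD[rotated])
    then obtain \<alpha> y where y: "y \<in> Pi\<^sub>E I Y" "D = closed_ball (Pi\<^sub>E I Y) (prod_u I u) \<alpha> y"
      unfolding closed_balls_def by blast
    have D2: "D = {w\<in>Pi\<^sub>E I Y. \<forall>i\<in>I. \<alpha> \<le> u i (y i) (w i)}"
      unfolding y(2) closed_ball_def
    proof (rule Collect_cong)
      fix w
      show "(w \<in> Pi\<^sub>E I Y \<and> \<alpha> \<le> prod_u I u y w) = (w \<in> Pi\<^sub>E I Y \<and> (\<forall>i\<in>I. \<alpha> \<le> u i (y i) (w i)))"
        by (cases "w \<in> Pi\<^sub>E I Y") (simp_all add: prod_ge[OF ultra fin_or_wo y(1)])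
    qed
    have "x \<in> D" using D C(3) by blast
    hence xi: "\<forall>i\<in>I. \<alpha> \<le> u i (y i) (x i)" unfolding D2 by simp
    have rc: "(\<alpha> \<le> u i (y i) (w i)) = (\<alpha> \<le> u i (x i) (w i))"
      if w: "w \<in> Pi\<^sub>E I Y" and i: "i \<in> I" for w i
    proof (rule recenter[of "Y i" "u i" "x i" "y i" \<alpha> "w i"])
      show "ultrametric (Y i) (u i)" using ultra i by blast
      show "x i \<in> Y i" using xm i by (rule PiE_mem)
      show "y i \<in> Y i" using y(1) i by (rule PiE_mem)
      show "w i \<in> Y i" using w i by (rule PiE_mem)
      show "\<alpha> \<le> u i (y i) (x i)" using xi i by blast
    qed
    have "D = S \<alpha>" unfolding D2 S_def
    proof (rule Collect_cong)
      fix w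
      show "(w \<in> Pi\<^sub>E I Y \<and> (\<forall>i\<in>I. \<alpha> \<le> u i (y i) (w i))) =
            (w \<in> Pi\<^sub>E I Y \<and> (\<forall>i\<in>I. \<alpha> \<le> u i (x i) (w i)))"
        using rc[of w] by auto
    qed
    thus ?thesis by blast
  qed
  have "B = \<Union>(S ` A)"
  proof
    show "B \<subseteq> \<Union>(S ` A)"
    proof
      fix w assume "w \<in> B"
      then obtain D where D: "D \<in> C" "w \<in> D" using C(4) by blast
      then obtain \<alpha> where "D = S \<alpha>" using key by blast
      thus "w \<in> \<Union>(S ` A)" using D unfolding A_def by blast
    qed
    show "\<Union>(S ` A) \<subseteq> B" unfolding A_def C(4) by blast
  qed
  moreover have "A \<noteq> {}" using C(1) key A_def by blast
  ultimately show ?thesis using xm unfolding S_def by blast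
qed

lemma proj:
  assumes ultra: "\<forall>i\<in>I. ultrametric (Y i) (u i)"
    and x: "x \<in> Pi\<^sub>E I Y" and i: "i \<in> I"
  shows "(\<lambda>w. w i) ` {w\<in>Pi\<^sub>E I Y. \<exists>\<alpha>\<in>A. \<forall>j\<in>I. \<alpha> \<le> u j (x j) (w j)}
         = {v\<in>Y i. \<exists>\<alpha>\<in>A. \<alpha> \<le> u i (x i) v}"
proof
  show "(\<lambda>w. w i) ` {w\<in>Pi\<^sub>E I Y. \<exists>\<alpha>\<in>A. \<forall>j\<in>I. \<alpha> \<le> u j (x j) (w j)}
         \<subseteq> {v\<in>Y i. \<exists>\<alpha>\<in>A. \<alpha> \<le> u i (x i) v}"
    using i by (auto dest: PiE_mem)
  show "{v\<in>Y i. \<exists>\<alpha>\<in>A. \<alpha> \<le> u i (x i) v} \<subseteq>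
        (\<lambda>w. w i) ` {w\<in>Pi\<^sub>E I Y. \<exists>\<alpha>\<in>A. \<forall>j\<in>I. \<alpha> \<le> u j (x j) (w j)}"
  proof
    fix v assume v: "v \<in> {v\<in>Y i. \<exists>\<alpha>\<in>A. \<alpha> \<le> u i (x i) v}"
    then obtain \<alpha> where a: "\<alpha>\<in>A" "\<alpha> \<le> u i (x i) v" by blast
    let ?w = "x(i := v)"
    have wm: "?w \<in> Pi\<^sub>E I Y" using x v i by (auto simp: PiE_iff extensional_def)
    have "\<forall>j\<in>I. \<alpha> \<le> u j (x j) (?w j)"
    proof
      fix j assume j: "j \<in> I"
      show "\<alpha> \<le> u j (x j) (?w j)"
      proof (cases "j = i")
        case True thus ?thesis using a by simp
      next
        case False
        have "u j (x j) (x j) = top" using um_top ultra j x by (metis PiE_mem)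
        thus ?thesis using False by simp
      qed
    qed
    hence "?w \<in> {w\<in>Pi\<^sub>E I Y. \<exists>\<alpha>\<in>A. \<forall>j\<in>I. \<alpha> \<le> u j (x j) (w j)}" using wm a by blast
    moreover have "v = ?w i" by simp
    ultimately show "v \<in> (\<lambda>w. w i) ` {w\<in>Pi\<^sub>E I Y. \<exists>\<alpha>\<in>A. \<forall>j\<in>I. \<alpha> \<le> u j (x j) (w j)}"
      by blast
  qed
qed

theorem proposition10:
  fixes I :: "'i set" and Y :: "'i \<Rightarrow> 'a set"
    and u :: "'i \<Rightarrow> 'a \<Rightarrow> 'a \<Rightarrow> 'g::{linorder,order_top}"
  assumes ultra: "\<forall>i\<in>I. ultrametric (Y i) (u i)"
    and fin_or_wo: "finite I \<or> well_ordered_set (\<Union>i\<in>I. value_set (Y i) (u i))"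
    and sc: "\<forall>i\<in>I. spherically_complete (Y i) (u i)"
  shows "spherically_complete (Pi\<^sub>E I Y) (prod_u I u)"
  unfolding spherically_complete_def
proof (intro allI impI)
  fix N assume N: "nest_of_balls (Pi\<^sub>E I Y) (prod_u I u) N"
  have form: "\<exists>x\<in>Pi\<^sub>E I Y. \<exists>A. A \<noteq> {} \<and>
           B = {w\<in>Pi\<^sub>E I Y. \<exists>\<alpha>\<in>A. \<forall>i\<in>I. \<alpha> \<le> u i (x i) (w i)}" if "B \<in> N" for B
    using prod_ball_form[OF ultra fin_or_wo] N that unfolding nest_of_balls_def by blast
  have pick: "\<exists>v. \<forall>B\<in>N. v \<in> (\<lambda>w. w i) ` B" if i: "i \<in> I" for i
  proof -
    have "nest_of_balls (Y i) (u i) ((`) (\<lambda>w. w i) ` N)"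
      unfolding nest_of_balls_def
    proof (intro conjI ballI)
      show "(`) (\<lambda>w. w i) ` N \<noteq> {}" using N unfolding nest_of_balls_def by blast
    next
      fix B' assume "B' \<in> (`) (\<lambda>w. w i) ` N"
      then obtain B where B: "B \<in> N" "B' = (\<lambda>w. w i) ` B" by blast
      obtain x A where xA: "x\<in>Pi\<^sub>E I Y" "A \<noteq> {}"
        "B = {w\<in>Pi\<^sub>E I Y. \<exists>\<alpha>\<in>A. \<forall>i\<in>I. \<alpha> \<le> u i (x i) (w i)}"
        using form[OF B(1)] by blast
      have "B' = {v\<in>Y i. \<exists>\<alpha>\<in>A. \<alpha> \<le> u i (x i) v}"
        using B(2) xA(3) proj[OF ultra xA(1) i] by simp
      moreover have "ultrametric (Y i) (u i)" using ultra i by blast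
      ultimately show "is_ball (Y i) (u i) B'"
        using ball_of[OF _ PiE_mem[OF xA(1) i] xA(2)] by simp
    next
      fix B1 B2 assume "B1 \<in> (`) (\<lambda>w. w i) ` N" "B2 \<in> (`) (\<lambda>w. w i) ` N"
      then obtain C1 C2 where C: "C1 \<in> N" "C2 \<in> N" "B1 = (\<lambda>w. w i) ` C1" "B2 = (\<lambda>w. w i) ` C2"
        by blast
      have "C1 \<subseteq> C2 \<or> C2 \<subseteq> C1" using N C(1,2) unfolding nest_of_balls_def by blast
      thus "B1 \<subseteq> B2 \<or> B2 \<subseteq> B1" unfolding C(3,4) using image_mono by blast
    qed
    hence "\<Inter>((`) (\<lambda>w. w i) ` N) \<noteq> {}" using sc i unfolding spherically_complete_def by blast
    thus ?thesis by blast
  qed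
  have "\<forall>i\<in>I. \<exists>v. \<forall>B\<in>N. v \<in> (\<lambda>w. w i) ` B" using pick by blast
  hence "\<exists>f. \<forall>i\<in>I. \<forall>B\<in>N. f i \<in> (\<lambda>w. w i) ` B" by (rule bchoice)
  then obtain zf where zf: "\<forall>i\<in>I. \<forall>B\<in>N. zf i \<in> (\<lambda>w. w i) ` B" by blast
  define z where "z = restrict zf I"
  obtain B0 where B0: "B0 \<in> N" using N unfolding nest_of_balls_def by blast
  have zm: "z \<in> Pi\<^sub>E I Y"
  proof -
    obtain x A where xA: "x\<in>Pi\<^sub>E I Y" "A \<noteq> {}"
        "B0 = {w\<in>Pi\<^sub>E I Y. \<exists>\<alpha>\<in>A. \<forall>i\<in>I. \<alpha> \<le> u i (x i) (w i)}"
      using form[OF B0] by blast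
    have "\<forall>i\<in>I. zf i \<in> Y i"
    proof
      fix i assume i: "i \<in> I"
      then obtain w where w: "w \<in> B0" "zf i = w i" using zf B0 by blast
      have "w \<in> Pi\<^sub>E I Y" using w(1) xA(3) by blast
      thus "zf i \<in> Y i" using w(2) i by (simp add: PiE_mem)
    qed
    thus ?thesis unfolding z_def by (simp add: PiE_iff)
  qed
  have "z \<in> \<Inter>N"
  proof
    fix B assume B: "B \<in> N"
    obtain x A where xA: "x\<in>Pi\<^sub>E I Y" "A \<noteq> {}"
        "B = {w\<in>Pi\<^sub>E I Y. \<exists>\<alpha>\<in>A. \<forall>i\<in>I. \<alpha> \<le> u i (x i) (w i)}"
      using form[OF B] by blast
    have pr: "\<exists>\<alpha>\<in>A. \<alpha> \<le> u i (x i) (z i)" if i: "i\<in>I" for i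
    proof -
      have "zf i \<in> {v\<in>Y i. \<exists>\<alpha>\<in>A. \<alpha> \<le> u i (x i) v}"
      proof -
        have "zf i \<in> (\<lambda>w. w i) ` B" using zf i B by blast
        thus ?thesis unfolding xA(3) proj[OF ultra xA(1) i, of A] .
      qed
      thus ?thesis using i unfolding z_def by simp
    qed
    have "\<exists>\<alpha>\<in>A. \<forall>i\<in>I. \<alpha> \<le> u i (x i) (z i)"
    proof (cases "I = {}")
      case True thus ?thesis using xA(2) by blast
    next
      case False
      obtain k where k: "k\<in>I" "\<forall>i\<in>I. u k (x k) (z k) \<le> u i (x i) (z i)"
        using least_attained[OF ultra fin_or_wo False xA(1) zm] by blast
      obtain \<alpha> where "\<alpha>\<in>A" "\<alpha> \<le> u k (x k) (z k)" using pr k(1) by blast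
      thus ?thesis using k by (meson order_trans)
    qed
    thus "z \<in> B" using xA(3) zm by blast
  qed
  thus "\<Inter>N \<noteq> {}" by blast
qed

end
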